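(* Let $X\subseteq\mathcal A^{\mathbb Z}$ be a subshift generated by an everywhere growing directive sequence $\overleftarrow\sigma=(\sigma_n:\mathcal A_{n+1}^*\to\mathcal A_n^* )_{n\ge0}$ with $\mathcal A_0=\mathcal A$ and of finite alphabet rank. Assume that for every $n\ge0$ the incidence matrix $M(\sigma_n)$ is invertible over $\mathbb R$. Then any shift-invariant measure $\mu$ on $X$ is determined by the values $\mu([a])$, $a\in\mathcal A$; i.e. two invariant measures $\mu,\mu'$ on $X$ with $\mu([a])=\mu'([a])$ for all $a\in\mathcal A$ are equal.
   Context: Directive sequence: non-erasing monoid morphisms $\sigma_n:\mathcal A_{n+1}^*\to\mathcal A_n^*$ over finite alphabets, $\sigma_{[0,n)}=\sigma_0\circ\cdots\circ\sigma_{n-1}$; it generates the subshift of all $\mathbf x\in\mathcal A_0^{\mathbb Z}$ whose finite factors are factors of some $\sigma_{[0,n)}(a)$, $a\in\mathcal A_n$. Everywhere growing: $\min_{a\in\mathcal A_n}|\sigma_{[0,n)}(a)|\to\infty$. Finite alphabet rank: the cardinalities $\mathrm{card}(\mathcal A_n)$ are bounded. Incidence matrix $M(\sigma)=(|\sigma(a)|_b)_{b\in\mathcal B,a\in\mathcal A}$. $[a]=\{\mathbf x:x_1=a\}$. *)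

theory Defs
  imports "HOL-Probability.Probability" "Jordan_Normal_Form.Matrix" "HOL-Library.Sublist"
begin

text \<open>Alphabets are finite sets of natural numbers; a morphism
  sigma_n : A_{n+1}^* -> A_n^* is given by its values on letters.\<close>

type_synonym directive = "nat \<Rightarrow> nat \<Rightarrow> nat list"

definition morphism_on :: "nat set \<Rightarrow> nat set \<Rightarrow> (nat \<Rightarrow> nat list) \<Rightarrow> bool" where
  "morphism_on Src Tgt s \<longleftrightarrow> (\<forall>a\<in>Src. s a \<noteq> [] \<and> set (s a) \<subseteq> Tgt)"

definition directive_seq :: "(nat \<Rightarrow> nat set) \<Rightarrow> directive \<Rightarrow> bool" where
  "directive_seq A \<sigma> \<longleftrightarrow> (\<forall>n. finite (A n) \<and> A n \<noteq> {} \<and> morphism_on (A (Suc n)) (A n) (\<sigma> n))"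

text \<open>sigma_[0,n) = sigma_0 o ... o sigma_{n-1}, applied to a letter.\<close>
fun sigma_comp :: "directive \<Rightarrow> nat \<Rightarrow> nat \<Rightarrow> nat list" where
  "sigma_comp \<sigma> 0 a = [a]"
| "sigma_comp \<sigma> (Suc n) a = concat (map (sigma_comp \<sigma> n) (\<sigma> n a))"

definition everywhere_growing :: "(nat \<Rightarrow> nat set) \<Rightarrow> directive \<Rightarrow> bool" where
  "everywhere_growing A \<sigma> \<longleftrightarrow>
     filterlim (\<lambda>n. Min ((\<lambda>a. length (sigma_comp \<sigma> n a)) ` A n)) at_top sequentially"

definition finite_alphabet_rank :: "(nat \<Rightarrow> nat set) \<Rightarrow> bool" where
  "finite_alphabet_rank A \<longleftrightarrow> (\<exists>K. \<forall>n. card (A n) \<le> K)"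

definition incidence_mat :: "nat set \<Rightarrow> nat set \<Rightarrow> (nat \<Rightarrow> nat list) \<Rightarrow> real mat" where
  "incidence_mat Src B s = mat (card B) (card Src)
     (\<lambda>(i, j). real (count_list (s (sorted_list_of_set Src ! j)) (sorted_list_of_set B ! i)))"

definition generated_subshift :: "(nat \<Rightarrow> nat set) \<Rightarrow> directive \<Rightarrow> (int \<Rightarrow> nat) set" where
  "generated_subshift A \<sigma> = {x. (\<forall>i. x i \<in> A 0) \<and>
     (\<forall>i j. i \<le> j \<longrightarrow> (\<exists>n. \<exists>a\<in>A n. sublist (map x [i..j]) (sigma_comp \<sigma> n a)))}"

definition shift :: "(int \<Rightarrow> nat) \<Rightarrow> (int \<Rightarrow> nat)" where
  "shift x = (\<lambda>i. x (i + 1))"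

definition full_shift_M :: "(int \<Rightarrow> nat) measure" where
  "full_shift_M = (\<Pi>\<^sub>M i\<in>(UNIV::int set). count_space (UNIV::nat set))"

definition invariant_measure_on :: "(int \<Rightarrow> nat) set \<Rightarrow> (int \<Rightarrow> nat) measure \<Rightarrow> bool" where
  "invariant_measure_on X \<mu> \<longleftrightarrow>
     sets \<mu> = sets full_shift_M \<and> prob_space \<mu> \<and>
     (AE x in \<mu>. x \<in> X) \<and> distr \<mu> \<mu> shift = \<mu>"

definition cyl :: "nat \<Rightarrow> (int \<Rightarrow> nat) set" where
  "cyl a = {x. x 1 = a}"

end

theory Submission
  imports Defs
begin
definition occ :: "nat list \<Rightarrow> nat list \<Rightarrow> nat" where
  "occ w u = (\<Sum>k<length u. if take (length w) (drop k u) = w then 1 else 0)"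

lemma sum_lessThan_add_nat: "(\<Sum>k<m+n. g k) = (\<Sum>k<m. g k) + (\<Sum>k<n. g (m+k))"
  for g :: "nat \<Rightarrow> 'a::comm_monoid_add"
  by (induction n) (auto simp: add.assoc)

lemma card_boundary: "card {k. k < n \<and> n < k + m} \<le> m"
proof -
  have "{k. k < n \<and> n < k + m} \<subseteq> {n - m ..< n}" by auto
  then show ?thesis by (metis card_atLeastLessThan card_mono diff_diff_cancel diff_le_self finite_atLeastLessThan le_trans nat_le_linear)
qed

lemma occ_append:
  "occ w xs + occ w ys \<le> occ w (xs@ys) \<and> occ w (xs@ys) \<le> occ w xs + occ w ys + length w"
proof -
  define t where "t = (\<lambda>u. if take (length w) u = w then 1 else 0::nat)"
  have o: "occ w u = (\<Sum>k<length u. t (drop k u))" for u unfolding occ_def t_def by simp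
  have split: "occ w (xs@ys) = (\<Sum>k<length xs. t (drop k xs @ ys)) + occ w ys"
    unfolding o by (simp add: sum_lessThan_add_nat)
  have lo: "t (drop k xs) \<le> t (drop k xs @ ys)" if "k < length xs" for k
    unfolding t_def by (auto simp: take_append dest: arg_cong[of _ _ length])
  have hi: "t (drop k xs @ ys) \<le> t (drop k xs) + (if length xs < k + length w then 1 else 0)" if "k < length xs" for k
    unfolding t_def by (auto simp: take_append)
  have s1: "occ w xs \<le> (\<Sum>k<length xs. t (drop k xs @ ys))"
    unfolding o by (rule sum_mono) (use lo in auto)
  have "(\<Sum>k<length xs. t (drop k xs @ ys)) \<le> (\<Sum>k<length xs. t (drop k xs) + (if length xs < k + length w then 1 else 0))"
    by (rule sum_mono) (use hi in auto)
  also have "\<dots> = occ w xs + (\<Sum>k<length xs. if length xs < k + length w then 1 else 0)"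
    unfolding o by (simp add: sum.distrib)
  also have "(\<Sum>k<length xs. if length xs < k + length w then 1 else 0::nat) = card {k. k < length xs \<and> length xs < k + length w}"
    by (simp add: sum.If_cases Collect_conj_eq lessThan_def Int_commute)
  finally have s2: "(\<Sum>k<length xs. t (drop k xs @ ys)) \<le> occ w xs + length w"
    using card_boundary[of "length xs" "length w"] by linarith
  show ?thesis using s1 s2 split by linarith
qed

lemma occ_le_length: "occ w u \<le> length u"
proof -
  have "occ w u \<le> (\<Sum>k<length u. 1)" unfolding occ_def by (rule sum_mono) auto
  then show ?thesis by simp
qed

lemma occ_concat:
  "(\<Sum>b\<leftarrow>v. occ w (f b)) \<le> occ w (concat (map f v)) \<and>
   occ w (concat (map f v)) \<le> (\<Sum>b\<leftarrow>v. occ w (f b)) + length v * length w"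
proof (induction v)
  case Nil then show ?case by (simp add: occ_def)
next
  case (Cons b v)
  have "concat (map f (b#v)) = f b @ concat (map f v)" by simp
  then show ?case using occ_append[of w "f b" "concat (map f v)"] Cons by auto
qed

lemma prefix_decomp:
  "prefix u (concat (map f v)) \<Longrightarrow> (\<forall>b\<in>set v. length (f b) \<le> R) \<Longrightarrow>
   \<exists>v1 s. u = concat (map f v1) @ s \<and> set v1 \<subseteq> set v \<and> length s \<le> R"
proof (induction v arbitrary: u)
  case Nil then show ?case by (intro exI[of _ "[]"]) auto
next
  case (Cons b v)
  from Cons.prems(1) have "prefix u (f b) \<or> (\<exists>us. u = f b @ us \<and> prefix us (concat (map f v)))"
    by (simp add: prefix_append)
  then show ?case
  proof
    assume "prefix u (f b)"
    then have "length u \<le> R" using Cons.prems(2) prefix_length_le by fastforce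
    then show ?thesis by (intro exI[of _ "[]"] exI[of _ u]) auto
  next
    assume "\<exists>us. u = f b @ us \<and> prefix us (concat (map f v))"
    then obtain us where us: "u = f b @ us" "prefix us (concat (map f v))" by blast
    from Cons.IH[OF us(2)] Cons.prems(2) obtain v1 s where "us = concat (map f v1) @ s" "set v1 \<subseteq> set v" "length s \<le> R" by auto
    then show ?thesis using us by (intro exI[of _ "b#v1"] exI[of _ s]) auto
  qed
qed

lemma suffix_decomp:
  "suffix u (concat (map f v)) \<Longrightarrow> (\<forall>b\<in>set v. length (f b) \<le> R) \<Longrightarrow>
   \<exists>p v1. u = p @ concat (map f v1) \<and> set v1 \<subseteq> set v \<and> length p \<le> R"
proof (induction v arbitrary: u)
  case Nil then show ?case by (intro exI[of _ "[]"]) (auto simp: suffix_def)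
next
  case (Cons b v)
  from Cons.prems(1) have "suffix u (concat (map f v)) \<or> (\<exists>us. u = us @ concat (map f v) \<and> suffix us (f b))"
    by (simp add: suffix_append)
  then show ?case
  proof
    assume "suffix u (concat (map f v))"
    from Cons.IH[OF this] Cons.prems(2) show ?thesis by fastforce
  next
    assume "\<exists>us. u = us @ concat (map f v) \<and> suffix us (f b)"
    then obtain us where us: "u = us @ concat (map f v)" "suffix us (f b)" by blast
    then have "length us \<le> R" using Cons.prems(2) suffix_length_le by fastforce
    then show ?thesis using us by (intro exI[of _ us] exI[of _ v]) auto
  qed
qed

lemma sublist_decomp:
  assumes "sublist u (concat (map f v))" "\<forall>b\<in>set v. length (f b) \<le> R"
  shows "\<exists>p v1 s. u = p @ concat (map f v1) @ s \<and> set v1 \<subseteq> set v \<and> length p \<le> R \<and> length s \<le> R"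
proof -
  from assms(1) obtain ys where ys: "prefix ys (concat (map f v))" "suffix u ys" by (auto simp: sublist_altdef)
  from prefix_decomp[OF ys(1) assms(2)] obtain v1 s where v1: "ys = concat (map f v1) @ s" "set v1 \<subseteq> set v" "length s \<le> R" by blast
  from ys(2) v1(1) have "suffix u s \<or> (\<exists>us. u = us @ s \<and> suffix us (concat (map f v1)))"
    by (simp add: suffix_append)
  then show ?thesis
  proof
    assume "suffix u s"
    then have "length u \<le> R" using v1(3) suffix_length_le by fastforce
    then show ?thesis by (intro exI[of _ u] exI[of _ "[]"]) auto
  next
    assume "\<exists>us. u = us @ s \<and> suffix us (concat (map f v1))"
    then obtain us where us: "u = us @ s" "suffix us (concat (map f v1))" by blast
    have "\<forall>b\<in>set v1. length (f b) \<le> R" using v1(2) assms(2) by auto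
    from suffix_decomp[OF us(2) this] obtain p v2 where "us = p @ concat (map f v2)" "set v2 \<subseteq> set v1" "length p \<le> R" by blast
    then show ?thesis using us v1 by (intro exI[of _ p] exI[of _ v2] exI[of _ s]) auto
  qed
qed

lemma ds_fin: "directive_seq A \<sigma> \<Longrightarrow> finite (A n)" by (simp add: directive_seq_def)
lemma ds_ne: "directive_seq A \<sigma> \<Longrightarrow> A n \<noteq> {}" by (simp add: directive_seq_def)
lemma ds_img: "directive_seq A \<sigma> \<Longrightarrow> b \<in> A (Suc n) \<Longrightarrow> set (\<sigma> n b) \<subseteq> A n"
  by (simp add: directive_seq_def morphism_on_def)

lemma sc_letters: "directive_seq A \<sigma> \<Longrightarrow> b \<in> A n \<Longrightarrow> set (sigma_comp \<sigma> n b) \<subseteq> A 0"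
proof (induction n arbitrary: b)
  case 0 then show ?case by simp
next
  case (Suc n)
  have "set (\<sigma> n b) \<subseteq> A n" using ds_img[OF Suc.prems] .
  then show ?case using Suc.IH[OF Suc.prems(1)] by auto
qed

lemma sc_expand_list:
  assumes "directive_seq A \<sigma>" "n \<le> m"
  shows "set xs \<subseteq> A m \<Longrightarrow> \<exists>v. set v \<subseteq> A n \<and> concat (map (sigma_comp \<sigma> m) xs) = concat (map (sigma_comp \<sigma> n) v)"
  using assms(2)
proof (induction m arbitrary: xs rule: dec_induct)
  case base then show ?case by (intro exI[of _ xs]) auto
next
  case (step m)
  have "\<exists>v. set v \<subseteq> A n \<and> concat (map (sigma_comp \<sigma> (Suc m)) ys) = concat (map (sigma_comp \<sigma> n) v)"
    if "set ys \<subseteq> A (Suc m)" for ys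
    using that
  proof (induction ys)
    case Nil then show ?case by (intro exI[of _ "[]"]) auto
  next
    case (Cons d ys)
    have "set ys \<subseteq> A (Suc m)" using Cons.prems by simp
    then obtain v' where v': "set v' \<subseteq> A n" "concat (map (sigma_comp \<sigma> (Suc m)) ys) = concat (map (sigma_comp \<sigma> n) v')"
      using Cons.IH by blast
    have "set (\<sigma> m d) \<subseteq> A m" using ds_img[OF assms(1)] Cons.prems by auto
    from step.IH[OF this] obtain vd where vd: "set vd \<subseteq> A n" "concat (map (sigma_comp \<sigma> m) (\<sigma> m d)) = concat (map (sigma_comp \<sigma> n) vd)" by blast
    have e: "sigma_comp \<sigma> (Suc m) d = concat (map (sigma_comp \<sigma> n) vd)" using vd(2) by simp
    have "concat (map (sigma_comp \<sigma> (Suc m)) (d # ys)) = concat (map (sigma_comp \<sigma> n) (vd @ v'))"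
      by (simp only: list.map concat.simps e v'(2) map_append concat_append)
    moreover have "set (vd @ v') \<subseteq> A n" using v'(1) vd(1) by simp
    ultimately show ?case by blast
  qed
  then show ?case using step.prems by blast
qed

lemma sc_expand:
  assumes "directive_seq A \<sigma>" "n \<le> m" "c \<in> A m"
  shows "\<exists>v. set v \<subseteq> A n \<and> sigma_comp \<sigma> m c = concat (map (sigma_comp \<sigma> n) v)"
  using sc_expand_list[OF assms(1,2), of "[c]"] assms(3) by simp

lemma count_concat:
  assumes "finite C" "set xs \<subseteq> C"
  shows "real (count_list (concat (map g xs)) a) = (\<Sum>c\<in>C. real (count_list xs c) * real (count_list (g c) a))"
  using assms(2)
proof (induction xs)
  case Nil then show ?case by simp
next
  case (Cons x xs)
  have "(\<Sum>c\<in>C. real (count_list (x#xs) c) * real (count_list (g c) a)) =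
        (\<Sum>c\<in>C. real (count_list xs c) * real (count_list (g c) a) + (if x = c then real (count_list (g c) a) else 0))"
    by (intro sum.cong) (auto simp: algebra_simps)
  also have "\<dots> = (\<Sum>c\<in>C. real (count_list xs c) * real (count_list (g c) a)) + real (count_list (g x) a)"
    using Cons.prems assms(1) by (simp add: sum.distrib sum.delta)
  finally show ?case using Cons by simp
qed

lemma sum_set_sorted: "finite S \<Longrightarrow> sum g S = (\<Sum>i<card S. g (sorted_list_of_set S ! i))"
proof -
  assume "finite S"
  then have "sum g S = sum_list (map g (sorted_list_of_set S))"
    by (metis sorted_list_of_set(1) sorted_list_of_set(3) sum_list_distinct_conv_sum_set)
  also have "\<dots> = (\<Sum>i<length (sorted_list_of_set S). g (sorted_list_of_set S ! i))"
    by (simp add: sum_list_sum_nth atLeast0LessThan)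
  finally show ?thesis by simp
qed

lemma lin_level:
  assumes ds: "directive_seq A \<sigma>" and inv: "invertible_mat (incidence_mat (A (Suc n)) (A n) (\<sigma> n))"
  shows "\<exists>z. \<forall>b\<in>A (Suc n). (\<Sum>c\<in>A n. z c * real (count_list (\<sigma> n b) c)) = W b"
proof -
  define S0 where "S0 = sorted_list_of_set (A n)"
  define S1 where "S1 = sorted_list_of_set (A (Suc n))"
  define M where "M = incidence_mat (A (Suc n)) (A n) (\<sigma> n)"
  define m where "m = card (A n)"
  have M: "M = mat m (card (A (Suc n))) (\<lambda>(i, j). real (count_list (\<sigma> n (S1 ! j)) (S0 ! i)))"
    unfolding M_def incidence_mat_def S0_def S1_def m_def by simp
  from inv have sq: "square_mat M" and "\<exists>B. inverts_mat M B \<and> inverts_mat B M"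
    unfolding invertible_mat_def M_def by auto
  then obtain B where B1: "M * B = 1\<^sub>m (dim_row M)" and B2: "B * M = 1\<^sub>m (dim_row B)"
    unfolding inverts_mat_def by auto
  have c1: "card (A (Suc n)) = m" using sq M by simp
  have Mc: "M \<in> carrier_mat m m" using M c1 by simp
  have "dim_col B = m" using B1 Mc by (metis carrier_matD(1) dim_col_mat(1) index_mult_mat(3) one_mat_def)
  moreover have "dim_row B = m" using B2 Mc by (metis dim_col_mat(1) index_mult_mat(3) one_mat_def carrier_matD(2))
  ultimately have Bc: "B \<in> carrier_mat m m" by auto
  define wv where "wv = vec m (\<lambda>j. W (S1 ! j))"
  define zv where "zv = transpose_mat B *\<^sub>v wv"
  have wvc: "wv \<in> carrier_vec m" unfolding wv_def by simp
  have "transpose_mat M *\<^sub>v zv = (transpose_mat M * transpose_mat B) *\<^sub>v wv"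
    unfolding zv_def using Mc Bc wvc by (simp add: assoc_mult_mat_vec)
  also have "transpose_mat M * transpose_mat B = transpose_mat (B * M)"
    using Mc Bc by (simp add: transpose_mult)
  also have "\<dots> = 1\<^sub>m m" using B2 Bc by simp
  finally have key: "transpose_mat M *\<^sub>v zv = wv" using wvc by simp
  have zvd: "dim_vec zv = m" unfolding zv_def using Bc by simp
  define ix where "ix = (\<lambda>c::nat. SOME i. i < m \<and> S0 ! i = c)"
  define z where "z = (\<lambda>c. zv $ (ix c))"
  have S0: "distinct S0" "set S0 = A n" "length S0 = m"
    using ds_fin[OF ds] unfolding S0_def m_def by auto
  have S1: "distinct S1" "set S1 = A (Suc n)" "length S1 = m"
    using ds_fin[OF ds] c1 unfolding S1_def by auto
  have ixi: "ix (S0 ! i) = i" if "i < m" for i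
  proof -
    have "\<exists>i'. i' < m \<and> S0 ! i' = S0 ! i" using that by blast
    then have "ix (S0 ! i) < m \<and> S0 ! (ix (S0 ! i)) = S0 ! i" unfolding ix_def by (rule someI_ex)
    then show ?thesis using S0 that nth_eq_iff_index_eq by metis
  qed
  have "\<forall>b\<in>A (Suc n). (\<Sum>c\<in>A n. z c * real (count_list (\<sigma> n b) (c::nat))) = W b"
  proof (intro ballI)
    fix b assume b: "b \<in> A (Suc n)"
    obtain j where j: "j < m" "S1 ! j = b" using S1 b by (metis in_set_conv_nth)
    have "(\<Sum>c\<in>A n. z c * real (count_list (\<sigma> n b) c)) = (\<Sum>i<m. z (S0 ! i) * real (count_list (\<sigma> n b) (S0 ! i)))"
      using sum_set_sorted[OF ds_fin[OF ds, of n], of "\<lambda>c. z c * real (count_list (\<sigma> n b) c)"] unfolding S0_def m_def by simp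
    also have "\<dots> = (\<Sum>i<m. zv $ i * M $$ (i, j))"
      using S0 j M c1 by (intro sum.cong) (auto simp: z_def ixi)
    also have "\<dots> = (transpose_mat M *\<^sub>v zv) $ j"
      using j Mc zvd by (auto simp: scalar_prod_def atLeast0LessThan mult.commute intro!: sum.cong)
    also have "\<dots> = W b" using key j unfolding wv_def by simp
    finally show "(\<Sum>c\<in>A n. z c * real (count_list (\<sigma> n b) c)) = W b" .
  qed
  then show ?thesis by blast
qed

lemma lin_all:
  assumes ds: "directive_seq A \<sigma>" and inv: "\<forall>n. invertible_mat (incidence_mat (A (Suc n)) (A n) (\<sigma> n))"
  shows "\<exists>y. \<forall>b\<in>A n. (\<Sum>a\<in>A 0. y a * real (count_list (sigma_comp \<sigma> n b) a)) = W b"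
proof (induction n arbitrary: W)
  case 0
  show ?case
  proof (intro exI[of _ W] ballI)
    fix b assume "b \<in> A 0"
    then show "(\<Sum>a\<in>A 0. W a * real (count_list (sigma_comp \<sigma> 0 b) a)) = W b"
    proof -
      have "(\<Sum>a\<in>A 0. W a * real (count_list (sigma_comp \<sigma> 0 b) a)) = (\<Sum>a\<in>A 0. if b = a then W a else 0)"
        by (intro sum.cong) auto
      also have "\<dots> = W b" using ds_fin[OF ds] \<open>b \<in> A 0\<close> by (simp add: sum.delta)
      finally show ?thesis .
    qed
  qed
next
  case (Suc n)
  obtain z where z: "\<forall>b\<in>A (Suc n). (\<Sum>c\<in>A n. z c * real (count_list (\<sigma> n b) c)) = W b"
    using lin_level[OF ds inv[rule_format, of n]] by blast
  obtain y where y: "\<forall>c\<in>A n. (\<Sum>a\<in>A 0. y a * real (count_list (sigma_comp \<sigma> n c) a)) = z c"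
    using Suc.IH by blast
  show ?case
  proof (intro exI[of _ y] ballI)
    fix b assume b: "b \<in> A (Suc n)"
    have sub: "set (\<sigma> n b) \<subseteq> A n" using ds_img[OF ds b] .
    have "(\<Sum>a\<in>A 0. y a * real (count_list (sigma_comp \<sigma> (Suc n) b) a)) =
          (\<Sum>a\<in>A 0. y a * (\<Sum>c\<in>A n. real (count_list (\<sigma> n b) c) * real (count_list (sigma_comp \<sigma> n c) a)))"
      by (simp only: sigma_comp.simps count_concat[OF ds_fin[OF ds] sub])
    also have "\<dots> = (\<Sum>c\<in>A n. real (count_list (\<sigma> n b) c) * (\<Sum>a\<in>A 0. y a * real (count_list (sigma_comp \<sigma> n c) a)))"
      unfolding sum_distrib_left by (subst sum.swap) (simp add: mult.left_commute)
    also have "\<dots> = (\<Sum>c\<in>A n. z c * real (count_list (\<sigma> n b) c))"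
      using y by (simp add: mult.commute)
    also have "\<dots> = W b" using z b by simp
    finally show "(\<Sum>a\<in>A 0. y a * real (count_list (sigma_comp \<sigma> (Suc n) b) a)) = W b" .
  qed
qed

lemma real_sum_list_map: "real (sum_list (map g v)) = (\<Sum>b\<leftarrow>v. real (g b))"
  by (induction v) auto

lemma letter_concat:
  assumes "\<forall>b\<in>An. (\<Sum>a\<in>A0. y a * real (count_list (f b) a)) = real (occ w (f b))" "set v \<subseteq> An"
  shows "(\<Sum>a\<in>A0. y a * real (count_list (concat (map f v)) a)) = (\<Sum>b\<leftarrow>v. real (occ w (f b)))"
  using assms(2)
proof (induction v)
  case Nil then show ?case by simp
next
  case (Cons b v)
  have "(\<Sum>a\<in>A0. y a * real (count_list (concat (map f (b#v))) a)) =
        (\<Sum>a\<in>A0. y a * real (count_list (f b) a)) + (\<Sum>a\<in>A0. y a * real (count_list (concat (map f v)) a))"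
    by (simp add: sum.distrib[symmetric] algebra_simps)
  then show ?case using Cons assms(1) by simp
qed

lemma letter_bound:
  "\<bar>\<Sum>a\<in>S. y a * real (count_list q a)\<bar> \<le> (\<Sum>a\<in>S. \<bar>y a\<bar>) * real (length q)"
proof -
  have "\<bar>\<Sum>a\<in>S. y a * real (count_list q a)\<bar> \<le> (\<Sum>a\<in>S. \<bar>y a * real (count_list q a)\<bar>)"
    by (rule sum_abs)
  also have "\<dots> \<le> (\<Sum>a\<in>S. \<bar>y a\<bar> * real (length q))"
    by (intro sum_mono) (simp add: abs_mult mult_left_mono count_le_length)
  finally show ?thesis by (simp add: sum_distrib_right)
qed

lemma length_concat_lower:
  "\<forall>b\<in>set v. Lm \<le> length (f b) \<Longrightarrow> length v * Lm \<le> length (concat (map f v))"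
  by (induction v) auto

lemma comb_est:
  fixes f :: "nat \<Rightarrow> nat list" and y :: "nat \<Rightarrow> real"
  assumes yb: "\<forall>b\<in>An. (\<Sum>a\<in>A0. y a * real (count_list (f b) a)) = real (occ w (f b))"
   and lo: "\<forall>b\<in>An. Lm \<le> length (f b)" and Lm: "0 < Lm"
   and hi: "\<forall>b\<in>An. length (f b) \<le> R"
   and v: "set v \<subseteq> An" and u: "sublist u (concat (map f v))"
  shows "\<bar>real (occ w u) - (\<Sum>a\<in>A0. y a * real (count_list u a))\<bar>
     \<le> real (length u) * real (length w) / real Lm + (2 * real R + 2 * real (length w) + 2 * (\<Sum>a\<in>A0. \<bar>y a\<bar>) * real R)"
proof -
  define Y where "Y = (\<Sum>a\<in>A0. \<bar>y a\<bar>)"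
  have "\<forall>b\<in>set v. length (f b) \<le> R" using hi v by auto
  from sublist_decomp[OF u this] obtain p v1 s where dec: "u = p @ concat (map f v1) @ s" "set v1 \<subseteq> set v"
    "length p \<le> R" "length s \<le> R" by blast
  define M where "M = concat (map f v1)"
  define Oc where "Oc = (\<Sum>b\<leftarrow>v1. occ w (f b))"
  have v1: "set v1 \<subseteq> An" using dec(2) v by auto
  have oc: "Oc \<le> occ w M" "occ w M \<le> Oc + length v1 * length w"
    using occ_concat[of w f v1] unfolding Oc_def M_def by auto
  have a1: "occ w p + occ w (M @ s) \<le> occ w u" "occ w u \<le> occ w p + occ w (M @ s) + length w"
    using occ_append[of w p "M @ s"] dec(1) unfolding M_def by auto
  have a2: "occ w M + occ w s \<le> occ w (M @ s)" "occ w (M @ s) \<le> occ w M + occ w s + length w"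
    using occ_append[of w M s] by auto
  have "occ w p \<le> length p" "occ w s \<le> length s" by (rule occ_le_length)+
  then have ou: "real Oc \<le> real (occ w u)"
     "real (occ w u) \<le> real Oc + real (length v1) * real (length w) + real R + real R + 2 * real (length w)"
    using oc a1 a2 dec(3,4) by (simp_all add: of_nat_mult[symmetric] del: of_nat_mult)
  have lm: "(\<Sum>a\<in>A0. y a * real (count_list M a)) = real Oc"
    using letter_concat[OF yb v1] unfolding M_def Oc_def by (simp add: real_sum_list_map)
  have cu: "(\<Sum>a\<in>A0. y a * real (count_list u a)) =
      (\<Sum>a\<in>A0. y a * real (count_list p a)) + (\<Sum>a\<in>A0. y a * real (count_list M a)) + (\<Sum>a\<in>A0. y a * real (count_list s a))"
    unfolding dec(1) M_def by (simp add: sum.distrib[symmetric] algebra_simps)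
  have bp: "\<bar>\<Sum>a\<in>A0. y a * real (count_list p a)\<bar> \<le> Y * real R"
    using letter_bound[where S=A0 and y=y and q=p] dec(3) unfolding Y_def
    by (meson Y_def order_trans mult_left_mono of_nat_le_iff sum_nonneg abs_ge_zero)
  have bs: "\<bar>\<Sum>a\<in>A0. y a * real (count_list s a)\<bar> \<le> Y * real R"
    using letter_bound[where S=A0 and y=y and q=s] dec(4) unfolding Y_def
    by (meson Y_def order_trans mult_left_mono of_nat_le_iff sum_nonneg abs_ge_zero)
  have "length v1 * Lm \<le> length M" unfolding M_def using v1 lo by (intro length_concat_lower) auto
  also have "length M \<le> length u" unfolding dec(1) M_def by simp
  finally have "real (length v1) * real Lm \<le> real (length u)" by (simp add: of_nat_mult[symmetric] del: of_nat_mult)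
  then have "real (length v1) \<le> real (length u) / real Lm" using Lm by (simp add: field_simps)
  then have vw: "real (length v1) * real (length w) \<le> real (length u) * real (length w) / real Lm"
    by (metis mult_right_mono of_nat_0_le_iff times_divide_eq_left)
  show ?thesis using ou lm cu bp bs vw unfolding Y_def[symmetric] by (simp add: abs_le_iff)
qed

definition word :: "(int \<Rightarrow> nat) \<Rightarrow> nat \<Rightarrow> nat list" where
  "word x L = map (\<lambda>i. x (int i)) [0..<L]"

lemma upto_word: "map x [0..int K] = word x (Suc K)"
  unfolding word_def by (rule nth_equalityI) (auto simp del: upt_Suc)

lemma window:
  assumes ds: "directive_seq A \<sigma>" and x: "x \<in> generated_subshift A \<sigma>"
  shows "\<exists>m c. n \<le> m \<and> c \<in> A m \<and> sublist (word x L) (sigma_comp \<sigma> m c)"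
proof -
  define Bn where "Bn = (\<Sum>k<n. \<Sum>c\<in>A k. length (sigma_comp \<sigma> k c))"
  have bnd: "length (sigma_comp \<sigma> k c) \<le> Bn" if "k < n" "c \<in> A k" for k c
  proof -
    have "length (sigma_comp \<sigma> k c) \<le> (\<Sum>c\<in>A k. length (sigma_comp \<sigma> k c))"
      using that ds_fin[OF ds] by (intro member_le_sum) auto
    also have "\<dots> \<le> Bn" unfolding Bn_def using that by (intro member_le_sum) auto
    finally show ?thesis .
  qed
  define K where "K = L + Bn"
  from x have "\<exists>m. \<exists>c\<in>A m. sublist (map x [0..int K]) (sigma_comp \<sigma> m c)"
    unfolding generated_subshift_def by auto
  then obtain m c where c: "c \<in> A m" "sublist (word x (Suc K)) (sigma_comp \<sigma> m c)"
    unfolding upto_word by blast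
  have "n \<le> m"
  proof (rule ccontr)
    assume "\<not> n \<le> m"
    then have "length (sigma_comp \<sigma> m c) \<le> Bn" using bnd c(1) by auto
    moreover have "length (word x (Suc K)) \<le> length (sigma_comp \<sigma> m c)" using sublist_length_le[OF c(2)] .
    ultimately show False unfolding word_def K_def by simp
  qed
  moreover have "sublist (word x L) (word x (Suc K))"
  proof -
    have "word x L = take L (word x (Suc K))" unfolding word_def K_def by (simp add: take_map)
    then show ?thesis by (metis prefix_imp_sublist take_is_prefix)
  qed
  ultimately show ?thesis using c sublist_order.order_trans by blast
qed

definition Cyl :: "nat \<Rightarrow> nat list \<Rightarrow> (int \<Rightarrow> nat) set" where
  "Cyl k w = {x. \<forall>i<length w. x (int (k + i)) = w ! i}"

lemma space_fs[simp]: "space full_shift_M = UNIV"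
  by (auto simp: full_shift_M_def space_PiM PiE_def extensional_def Pi_def)

lemma comp_meas: "(\<lambda>x. x j) \<in> measurable full_shift_M (count_space UNIV)"
  unfolding full_shift_M_def by (rule measurable_component_singleton) auto

lemma coord_sets: "{x. x j \<in> S} \<in> sets full_shift_M"
proof -
  have "{x. x j \<in> S} = (\<lambda>x. x j) -` S \<inter> space full_shift_M" by auto
  then show ?thesis using measurable_sets[OF comp_meas] by simp
qed

lemma Cyl_sets: "Cyl k w \<in> sets full_shift_M"
proof (cases "w = []")
  case True
  then have "Cyl k w = space full_shift_M" by (auto simp: Cyl_def)
  then show ?thesis using sets.top[of full_shift_M] by metis
next
  case False
  have "Cyl k w = (\<Inter>i\<in>{..<length w}. {x. x (int (k + i)) \<in> {w ! i}})" by (auto simp: Cyl_def)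
  moreover have "(\<Inter>i\<in>{..<length w}. {x. x (int (k + i)) \<in> {w ! i}}) \<in> sets full_shift_M"
    using False by (intro sets.finite_INT coord_sets) auto
  ultimately show ?thesis by simp
qed

lemma shift_meas: "shift \<in> measurable full_shift_M full_shift_M"
proof -
  have "(\<lambda>\<omega> i. (\<lambda>x. x (i + 1)) \<omega>) \<in> measurable full_shift_M (Pi\<^sub>M UNIV (\<lambda>_. count_space UNIV))"
    by (rule measurable_PiM_single') (auto intro: comp_meas simp: PiE_def extensional_def)
  then show ?thesis unfolding shift_def[abs_def] by (simp add: full_shift_M_def[symmetric])
qed

lemma shiftn_apply: "(shift ^^ d) x = (\<lambda>i. x (i + int d))"
  by (induction d) (auto simp: shift_def algebra_simps)

lemma shiftn_meas: "(shift ^^ d) \<in> measurable full_shift_M full_shift_M"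
proof (induction d)
  case 0 then show ?case by (simp add: id_def)
next
  case (Suc d)
  have "shift ^^ Suc d = shift \<circ> (shift ^^ d)" by simp
  then show ?case using measurable_comp[OF Suc.IH shift_meas] by (simp add: comp_def)
qed

context
  fixes X :: "(int \<Rightarrow> nat) set" and \<mu> :: "(int \<Rightarrow> nat) measure"
  assumes inv: "invariant_measure_on X \<mu>"
begin

lemma sets_mu: "sets \<mu> = sets full_shift_M" using inv by (simp add: invariant_measure_on_def)
lemma space_mu[simp]: "space \<mu> = UNIV" using sets_eq_imp_space_eq[OF sets_mu] by simp
lemma ps: "prob_space \<mu>" using inv by (simp add: invariant_measure_on_def)

lemma shift_inv: assumes S: "S \<in> sets full_shift_M" shows "emeasure \<mu> (shift -` S) = emeasure \<mu> S"
proof -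
  have sh: "shift \<in> measurable \<mu> \<mu>"
    using shift_meas measurable_cong_sets[OF sets_mu sets_mu] by simp
  have "emeasure \<mu> S = emeasure (distr \<mu> \<mu> shift) S" using inv by (simp add: invariant_measure_on_def)
  also have "\<dots> = emeasure \<mu> (shift -` S \<inter> space \<mu>)" using S sets_mu by (intro emeasure_distr[OF sh]) auto
  finally show ?thesis by simp
qed

lemma shiftn_inv: "S \<in> sets full_shift_M \<Longrightarrow> emeasure \<mu> ((shift ^^ d) -` S) = emeasure \<mu> S"
proof (induction d arbitrary: S)
  case 0 then show ?case by simp
next
  case (Suc d)
  have eq: "(shift ^^ Suc d) -` S = (shift ^^ d) -` (shift -` S)"
    by (auto simp del: funpow.simps simp: shiftn_apply shift_def algebra_simps)
  have meas: "shift -` S \<in> sets full_shift_M"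
    using measurable_sets[OF shift_meas Suc.prems] by simp
  have "emeasure \<mu> ((shift ^^ Suc d) -` S) = emeasure \<mu> ((shift ^^ d) -` (shift -` S))" unfolding eq ..
  also have "\<dots> = emeasure \<mu> (shift -` S)" by (rule Suc.IH[OF meas])
  also have "\<dots> = emeasure \<mu> S" by (rule shift_inv[OF Suc.prems])
  finally show ?case .
qed

lemma Cyl_shift: "Cyl k w = (shift ^^ k) -` Cyl 0 w"
proof -
  have "x \<in> (shift ^^ k) -` Cyl 0 w \<longleftrightarrow> x \<in> Cyl k w" for x
    by (simp del: funpow.simps add: shiftn_apply Cyl_def add.commute)
  then show ?thesis by blast
qed

lemma Cyl_inv: "measure \<mu> (Cyl k w) = measure \<mu> (Cyl 0 w)"
proof -
  have "emeasure \<mu> (Cyl k w) = emeasure \<mu> (Cyl 0 w)"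
    by (subst Cyl_shift[of k w]) (rule shiftn_inv[OF Cyl_sets])
  then show ?thesis by (simp add: measure_def)
qed

end

lemma occ_word_ind:
  assumes "w \<noteq> []" "L = N + length w - 1"
  shows "real (occ w (word x L)) = (\<Sum>k<N. indicator (Cyl k w) x)"
proof -
  have t: "(take (length w) (drop k (word x L)) = w) \<longleftrightarrow> (k < N \<and> x \<in> Cyl k w)" if "k < L" for k
  proof
    assume h: "take (length w) (drop k (word x L)) = w"
    have "length (take (length w) (drop k (word x L))) = length w" using h by simp
    then have "length w \<le> L - k" by (simp add: word_def)
    then have kN: "k < N" using assms that by (cases w) auto
    have "x (int (k + i)) = w ! i" if "i < length w" for i
    proof -
      have "k + i < L" using that \<open>length w \<le> L - k\<close> \<open>k < L\<close> by linarith
      have "w ! i = take (length w) (drop k (word x L)) ! i" using h by simp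
      also have "take (length w) (drop k (word x L)) ! i = x (int (k + i))" using that \<open>length w \<le> L - k\<close> \<open>k + i < L\<close> by (simp add: word_def)
      finally show ?thesis by simp
    qed
    then show "k < N \<and> x \<in> Cyl k w" using kN by (simp add: Cyl_def)
  next
    assume h: "k < N \<and> x \<in> Cyl k w"
    then have le: "k + length w \<le> L" using assms by (cases w) auto
    show "take (length w) (drop k (word x L)) = w"
      using h le by (intro nth_equalityI) (auto simp: word_def Cyl_def)
  qed
  have len: "length (word x L) = L" by (simp add: word_def)
  have "occ w (word x L) = (\<Sum>k<L. if k < N \<and> x \<in> Cyl k w then 1 else 0)"
    unfolding occ_def len by (intro sum.cong refl) (simp add: t)
  then have "real (occ w (word x L)) = (\<Sum>k<L. if k < N \<and> x \<in> Cyl k w then 1 else 0)"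
  proof -
    assume e: "occ w (word x L) = (\<Sum>k<L. if k < N \<and> x \<in> Cyl k w then 1 else 0)"
    have "real (occ w (word x L)) = (\<Sum>k<L. real (if k < N \<and> x \<in> Cyl k w then 1 else 0))"
      unfolding e by (rule of_nat_sum)
    also have "\<dots> = (\<Sum>k<L. if k < N \<and> x \<in> Cyl k w then 1 else 0)" by (intro sum.cong) auto
    finally show ?thesis .
  qed
  also have "\<dots> = (\<Sum>k<N. if x \<in> Cyl k w then 1 else 0)"
  proof -
    have "L = N + (length w - 1)" using assms by (cases w) auto
    then show ?thesis by (simp add: sum_lessThan_add_nat)
  qed
  also have "\<dots> = (\<Sum>k<N. indicator (Cyl k w) x)" by (intro sum.cong) (auto simp: indicator_def)
  finally show ?thesis .
qed

lemma count_word_ind: "real (count_list (word x L) a) = (\<Sum>k<L. indicator (Cyl k [a]) x)"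
proof (induction L)
  case 0 then show ?case by (simp add: word_def)
next
  case (Suc L)
  have "word x (Suc L) = word x L @ [x (int L)]" by (simp add: word_def)
  then show ?case using Suc by (simp add: Cyl_def indicator_def)
qed

lemma meas_est:
  assumes inv: "invariant_measure_on X \<mu>" and w: "w \<noteq> []" and L: "L = N + length w - 1"
   and bound: "\<forall>x\<in>X. \<bar>real (occ w (word x L)) - (\<Sum>a\<in>A0. y a * real (count_list (word x L) a))\<bar> \<le> E"
  shows "\<bar>real N * measure \<mu> (Cyl 0 w) - real L * (\<Sum>a\<in>A0. y a * measure \<mu> (Cyl 0 [a]))\<bar> \<le> E"
proof -
  interpret prob_space \<mu> using ps[OF inv] .
  have sets: "Cyl k v \<in> sets \<mu>" for k v using Cyl_sets sets_mu[OF inv] by simp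
  have fin: "emeasure \<mu> (Cyl k v) < \<infinity>" for k v using emeasure_finite[of "Cyl k v"] by (simp add: less_top[symmetric])
  define f where "f x = (\<Sum>k<N. indicator (Cyl k w) x :: real)" for x
  define g where "g x = (\<Sum>a\<in>A0. y a * (\<Sum>k<L. indicator (Cyl k [a]) x :: real))" for x
  have ii: "integrable \<mu> (indicator (Cyl k v) :: _ \<Rightarrow> real)" for k v
    using sets fin by (rule integrable_real_indicator)
  have intf: "integrable \<mu> f" unfolding f_def by (simp add: ii)
  have intg: "integrable \<mu> g" unfolding g_def by (simp add: ii)
  have If: "integral\<^sup>L \<mu> f = real N * measure \<mu> (Cyl 0 w)"
  proof -
    have "integral\<^sup>L \<mu> f = (\<Sum>k<N. integral\<^sup>L \<mu> (indicator (Cyl k w)))"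
      unfolding f_def by (rule Bochner_Integration.integral_sum[where f="\<lambda>k. (indicator (Cyl k w) :: (int \<Rightarrow> nat) \<Rightarrow> real)"]) (rule ii)
    also have "\<dots> = (\<Sum>k<N. measure \<mu> (Cyl 0 w))"
    proof (intro sum.cong refl)
      fix k
      have "integral\<^sup>L \<mu> (indicator (Cyl k w)) = measure \<mu> (Cyl k w)" by (simp add: space_mu[OF inv])
      then show "integral\<^sup>L \<mu> (indicator (Cyl k w)) = measure \<mu> (Cyl 0 w)" using Cyl_inv[OF inv, of k w] by simp
    qed
    finally show ?thesis by simp
  qed
  have Ig: "integral\<^sup>L \<mu> g = real L * (\<Sum>a\<in>A0. y a * measure \<mu> (Cyl 0 [a]))"
  proof -
    have "integral\<^sup>L \<mu> g = (\<Sum>a\<in>A0. integral\<^sup>L \<mu> (\<lambda>x. y a * (\<Sum>k<L. indicator (Cyl k [a]) x :: real)))"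
      unfolding g_def by (rule Bochner_Integration.integral_sum[where f="\<lambda>a x. y a * (\<Sum>k<L. indicator (Cyl k [a]) x :: real)"]) (simp add: ii)
    also have "\<dots> = (\<Sum>a\<in>A0. y a * (\<Sum>k<L. integral\<^sup>L \<mu> (indicator (Cyl k [a]))))"
      by (intro sum.cong refl) (simp add: Bochner_Integration.integral_sum ii)
    also have "\<dots> = (\<Sum>a\<in>A0. y a * (\<Sum>k<L. measure \<mu> (Cyl 0 [a])))"
    proof (intro sum.cong refl arg_cong2[where f=times])
      fix a k
      have "integral\<^sup>L \<mu> (indicator (Cyl k [a])) = measure \<mu> (Cyl k [a])" by (simp add: space_mu[OF inv])
      then show "integral\<^sup>L \<mu> (indicator (Cyl k [a])) = measure \<mu> (Cyl 0 [a])" using Cyl_inv[OF inv, of k "[a]"] by simp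
    qed
    finally show ?thesis by (simp add: sum_distrib_left algebra_simps)
  qed
  have ae: "AE x in \<mu>. f x \<le> g x + E \<and> g x \<le> f x + E"
  proof -
    have "AE x in \<mu>. x \<in> X" using inv by (simp add: invariant_measure_on_def)
    then show ?thesis
    proof (rule AE_mp, intro AE_I2 impI)
      fix x assume "x \<in> X"
      then have b: "\<bar>real (occ w (word x L)) - (\<Sum>a\<in>A0. y a * real (count_list (word x L) a))\<bar> \<le> E"
        using bound by auto
      have "f x = real (occ w (word x L))" unfolding f_def using occ_word_ind[OF w L] by simp
      moreover have "g x = (\<Sum>a\<in>A0. y a * real (count_list (word x L) a))"
        unfolding g_def using count_word_ind by simp
      ultimately show "f x \<le> g x + E \<and> g x \<le> f x + E" using b by (simp add: abs_le_iff)
    qed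
  qed
  have m1: "measure \<mu> (space \<mu>) = 1" using prob_space by simp
  have "integral\<^sup>L \<mu> f \<le> integral\<^sup>L \<mu> (\<lambda>x. g x + E)"
    by (rule integral_mono_AE) (use intf intg ae in auto)
  also have "\<dots> = integral\<^sup>L \<mu> g + E" using intg m1 by simp
  finally have 1: "integral\<^sup>L \<mu> f \<le> integral\<^sup>L \<mu> g + E" .
  have "integral\<^sup>L \<mu> g \<le> integral\<^sup>L \<mu> (\<lambda>x. f x + E)"
    by (rule integral_mono_AE) (use intf intg ae in auto)
  also have "\<dots> = integral\<^sup>L \<mu> f + E" using intf m1 by simp
  finally have 2: "integral\<^sup>L \<mu> g \<le> integral\<^sup>L \<mu> f + E" .
  show ?thesis using 1 2 If Ig by (simp add: abs_le_iff)
qed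

lemma cyl_Cyl: "cyl a = Cyl 1 [a]"
  by (auto simp: cyl_def Cyl_def)

lemma Cyl0_word: "x \<in> Cyl 0 u \<longleftrightarrow> word x (length u) = u"
proof
  assume "x \<in> Cyl 0 u" then show "word x (length u) = u"
    by (intro nth_equalityI) (auto simp: Cyl_def word_def)
next
  assume h: "word x (length u) = u"
  have "x (int i) = u ! i" if "i < length u" for i
  proof -
    have "u ! i = word x (length u) ! i" using h by simp
    also have "\<dots> = x (int i)" using that by (simp add: word_def)
    finally show ?thesis by simp
  qed
  then show "x \<in> Cyl 0 u" by (simp add: Cyl_def)
qed

lemma key_bound:
  assumes ds: "directive_seq A \<sigma>"
    and invm: "\<forall>n. invertible_mat (incidence_mat (A (Suc n)) (A n) (\<sigma> n))"
    and inv1: "invariant_measure_on (generated_subshift A \<sigma>) \<mu>"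
    and inv2: "invariant_measure_on (generated_subshift A \<sigma>) \<mu>'"
    and cyl: "\<forall>a\<in>A 0. emeasure \<mu> (cyl a) = emeasure \<mu>' (cyl a)"
    and w: "w \<noteq> []" and Lm: "0 < Min ((\<lambda>a. length (sigma_comp \<sigma> n a)) ` A n)"
  shows "\<exists>K. \<forall>N>0. real N * \<bar>measure \<mu> (Cyl 0 w) - measure \<mu>' (Cyl 0 w)\<bar>
      \<le> 2 * ((real N + real (length w)) * real (length w) / real (Min ((\<lambda>a. length (sigma_comp \<sigma> n a)) ` A n)) + K)"
proof -
  define X where "X = generated_subshift A \<sigma>"
  define f where "f = sigma_comp \<sigma> n"
  define Lm where "Lm = Min ((\<lambda>a. length (f a)) ` A n)"
  define R where "R = (\<Sum>b\<in>A n. length (f b))"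
  obtain y where y: "\<forall>b\<in>A n. (\<Sum>a\<in>A 0. y a * real (count_list (f b) a)) = real (occ w (f b))"
    using lin_all[OF ds invm, of n "\<lambda>b. real (occ w (f b))"] unfolding f_def by blast
  define K where "K = 2 * real R + 2 * real (length w) + 2 * (\<Sum>a\<in>A 0. \<bar>y a\<bar>) * real R"
  have Lm0: "0 < Lm" using Lm unfolding Lm_def f_def .
  have lo: "\<forall>b\<in>A n. Lm \<le> length (f b)" unfolding Lm_def using ds_fin[OF ds, of n] by auto
  have hi: "\<forall>b\<in>A n. length (f b) \<le> R" unfolding R_def using ds_fin[OF ds, of n]
    by (auto intro: member_le_sum)
  have Phi: "(\<Sum>a\<in>A 0. y a * measure \<mu> (Cyl 0 [a])) = (\<Sum>a\<in>A 0. y a * measure \<mu>' (Cyl 0 [a]))"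
  proof (intro sum.cong refl arg_cong2[where f=times])
    fix a assume a: "a \<in> A 0"
    have "measure \<mu> (Cyl 0 [a]) = measure \<mu> (cyl a)" using Cyl_inv[OF inv1, of 1 "[a]"] by (simp add: cyl_Cyl)
    also have "\<dots> = measure \<mu>' (cyl a)" using cyl a by (simp add: measure_def)
    also have "\<dots> = measure \<mu>' (Cyl 0 [a])" using Cyl_inv[OF inv2, of 1 "[a]"] by (simp add: cyl_Cyl)
    finally show "measure \<mu> (Cyl 0 [a]) = measure \<mu>' (Cyl 0 [a])" .
  qed
  have main: "real N * \<bar>measure \<mu> (Cyl 0 w) - measure \<mu>' (Cyl 0 w)\<bar>
      \<le> 2 * ((real N + real (length w)) * real (length w) / real Lm + K)" if N: "N > 0" for N
  proof -
    define L where "L = N + length w - 1"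
    define E where "E = real L * real (length w) / real Lm + K"
    have bx: "\<forall>x\<in>X. \<bar>real (occ w (word x L)) - (\<Sum>a\<in>A 0. y a * real (count_list (word x L) a))\<bar> \<le> E"
    proof
      fix x assume x: "x \<in> X"
      obtain m c where mc: "n \<le> m" "c \<in> A m" "sublist (word x L) (sigma_comp \<sigma> m c)"
        using window[OF ds x[unfolded X_def]] by blast
      obtain v where v: "set v \<subseteq> A n" "sigma_comp \<sigma> m c = concat (map f v)"
        using sc_expand[OF ds mc(1,2)] unfolding f_def by blast
      have sub: "sublist (word x L) (concat (map f v))" using mc(3) v(2) by simp
      have len: "length (word x L) = L" by (simp add: word_def)
      show "\<bar>real (occ w (word x L)) - (\<Sum>a\<in>A 0. y a * real (count_list (word x L) a))\<bar> \<le> E"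
        using comb_est[OF y lo Lm0 hi v(1) sub] unfolding len E_def K_def .
    qed
    note m1 = meas_est[OF inv1[folded X_def] w L_def bx]
    note m2 = meas_est[OF inv2[folded X_def] w L_def bx]
    have d: "real N * \<bar>measure \<mu> (Cyl 0 w) - measure \<mu>' (Cyl 0 w)\<bar> \<le> 2 * E"
    proof -
      have eqN: "real N * \<bar>measure \<mu> (Cyl 0 w) - measure \<mu>' (Cyl 0 w)\<bar> = \<bar>real N * measure \<mu> (Cyl 0 w) - real N * measure \<mu>' (Cyl 0 w)\<bar>"
        by (simp add: abs_mult right_diff_distrib[symmetric])
      show ?thesis using m1[unfolded Phi] m2 unfolding eqN abs_le_iff by linarith
    qed
    have "real L \<le> real N + real (length w)" unfolding L_def by simp
    then have "real L * real (length w) / real Lm \<le> (real N + real (length w)) * real (length w) / real Lm"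
      by (intro divide_right_mono mult_right_mono) auto
    then have "2 * E \<le> 2 * ((real N + real (length w)) * real (length w) / real Lm + K)" unfolding E_def by simp
    with d show ?thesis by (rule order_trans)
  qed
  show ?thesis unfolding Lm_def[symmetric, unfolded f_def] using main
    by (intro exI[of _ K]) (auto simp: Lm_def f_def)
qed

lemma arith_aux:
  fixes P Q K :: real
  assumes "P \<le> Q / 4" "Q \<le> 2 * (P + K)" "4 * K < Q" shows False
  using assms by (simp add: field_simps)

lemma key_eq:
  assumes ds: "directive_seq A \<sigma>" and eg: "everywhere_growing A \<sigma>"
    and invm: "\<forall>n. invertible_mat (incidence_mat (A (Suc n)) (A n) (\<sigma> n))"
    and inv1: "invariant_measure_on (generated_subshift A \<sigma>) \<mu>"
    and inv2: "invariant_measure_on (generated_subshift A \<sigma>) \<mu>'"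
    and cyl: "\<forall>a\<in>A 0. emeasure \<mu> (cyl a) = emeasure \<mu>' (cyl a)"
    and w: "w \<noteq> []"
  shows "measure \<mu> (Cyl 0 w) = measure \<mu>' (Cyl 0 w)"
proof (rule ccontr)
  assume ne: "measure \<mu> (Cyl 0 w) \<noteq> measure \<mu>' (Cyl 0 w)"
  define dd where "dd = \<bar>measure \<mu> (Cyl 0 w) - measure \<mu>' (Cyl 0 w)\<bar>"
  have dd: "dd > 0" using ne unfolding dd_def by simp
  define lw where "lw = real (length w)"
  have lw: "lw \<ge> 0" unfolding lw_def by simp
  define Lmf where "Lmf n = Min ((\<lambda>a. length (sigma_comp \<sigma> n a)) ` A n)" for n
  define Z where "Z = nat \<lceil>8 * lw / dd\<rceil> + 1"
  have "filterlim Lmf at_top sequentially" using eg unfolding everywhere_growing_def Lmf_def .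
  then have "eventually (\<lambda>n. Z \<le> Lmf n) sequentially" by (simp add: filterlim_at_top)
  then obtain n where n: "Z \<le> Lmf n" by (auto simp: eventually_sequentially)
  define Lm where "Lm = real (Lmf n)"
  have Lm0: "0 < Lmf n" using n unfolding Z_def by simp
  have "8 * lw / dd \<le> real Z" unfolding Z_def by linarith
  then have "8 * lw / dd \<le> Lm" using n unfolding Lm_def by linarith
  then have "8 * lw \<le> dd * Lm" using dd by (simp add: field_simps)
  then have q: "lw / Lm \<le> dd / 8" using Lm0 dd unfolding Lm_def by (simp add: field_simps)
  obtain K where K: "\<forall>N>0. real N * dd \<le> 2 * ((real N + lw) * lw / Lm + K)"
    using key_bound[OF ds invm inv1 inv2 cyl w Lm0[unfolded Lmf_def]] unfolding dd_def lw_def Lm_def Lmf_def by blast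
  define N where "N = nat \<lceil>4 * K / dd\<rceil> + length w + 1"
  have N0: "N > 0" unfolding N_def by simp
  have Nw: "lw \<le> real N" unfolding N_def lw_def by simp
  have NK: "4 * K / dd < real N" unfolding N_def by linarith
  then have NK': "4 * K < real N * dd" using dd by (simp add: field_simps)
  have b: "real N * dd \<le> 2 * ((real N + lw) * lw / Lm + K)" using K N0 by blast
  have "(real N + lw) * lw / Lm = (real N + lw) * (lw / Lm)" by simp
  also have "\<dots> \<le> (2 * real N) * (dd / 8)"
    by (intro mult_mono q) (use Nw lw Lm0 dd in \<open>auto simp: Lm_def\<close>)
  finally have "(real N + lw) * lw / Lm \<le> real N * dd / 4" by (simp add: mult.commute)
  then show False using b NK' arith_aux by blast
qed

lemma emb_eq: "prod_emb UNIV (\<lambda>_. count_space UNIV) J (Pi\<^sub>E J F) = {x::int \<Rightarrow> nat. \<forall>j\<in>J. x j \<in> F j}"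
  by (auto simp: prod_emb_def PiE_iff)

lemma rect_sets: "finite J \<Longrightarrow> {x::int \<Rightarrow> nat. \<forall>j\<in>J. x j \<in> F j} \<in> sets full_shift_M"
  using sets_PiM_I[of J UNIV F "\<lambda>_. count_space UNIV"] unfolding emb_eq full_shift_M_def by auto

definition shiftd :: "int set \<Rightarrow> nat" where "shiftd J = (\<Sum>j\<in>J. nat \<bar>j\<bar>)"

definition Uset :: "nat set \<Rightarrow> int set \<Rightarrow> (int \<Rightarrow> nat set) \<Rightarrow> nat list set" where
  "Uset A0 J F = {u. set u \<subseteq> A0 \<and> length u = 2 * shiftd J + 1 \<and> (\<forall>j\<in>J. u ! nat (j + int (shiftd J)) \<in> F j)}"

lemma rect_sum:
  assumes inv: "invariant_measure_on X \<nu>" and Xsub: "X \<subseteq> {x. \<forall>i. x i \<in> A0}" and fin: "finite A0"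
    and J: "finite J"
  shows "emeasure \<nu> {x. \<forall>j\<in>J. x j \<in> F j} = (\<Sum>u\<in>Uset A0 J F. emeasure \<nu> (Cyl 0 u))"
proof -
  define d where "d = shiftd J"
  define L where "L = 2 * d + 1"
  define U where "U = Uset A0 J F"
  define T where "T = {x::int \<Rightarrow> nat. \<forall>j\<in>J. x j \<in> F j}"
  define T' where "T' = {x::int \<Rightarrow> nat. \<forall>j\<in>J. x (j + int d) \<in> F j}"
  have dj: "nat \<bar>j\<bar> \<le> d" if "j \<in> J" for j
    unfolding d_def shiftd_def using J that by (intro member_le_sum) auto
  have j0: "0 \<le> j + int d" if "j \<in> J" for j using dj[OF that] by linarith
  have jL: "nat (j + int d) < L" if "j \<in> J" for j using dj[OF that] unfolding L_def by linarith
  have Tm: "T \<in> sets full_shift_M" unfolding T_def using rect_sets[OF J] .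
  have T'eq: "T' = (shift ^^ d) -` T" by (auto simp: T_def T'_def shiftn_apply simp del: funpow.simps)
  have T'm: "T' \<in> sets full_shift_M" unfolding T'eq using measurable_sets[OF shiftn_meas Tm] by simp
  have Ufin: "finite U"
    by (rule finite_subset[of _ "{u. set u \<subseteq> A0 \<and> length u = L}"])
       (auto simp: U_def Uset_def L_def d_def intro: finite_lists_length_eq[OF fin])
  define V where "V = (\<Union>u\<in>U. Cyl 0 u)"
  have Vm: "V \<in> sets full_shift_M" unfolding V_def using Ufin by (intro sets.finite_UN Cyl_sets) auto
  have eqv: "x \<in> T' \<longleftrightarrow> x \<in> V" if x: "\<forall>i. x i \<in> A0" for x
  proof -
    have lenU: "length u = L" if "u \<in> U" for u using that by (simp add: U_def Uset_def L_def d_def)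
    have "x \<in> V \<longleftrightarrow> (\<exists>u\<in>U. word x L = u)" unfolding V_def using lenU by (auto simp: Cyl0_word)
    also have "\<dots> \<longleftrightarrow> word x L \<in> U" by auto
    also have "\<dots> \<longleftrightarrow> (\<forall>j\<in>J. word x L ! nat (j + int d) \<in> F j)"
      using x by (auto simp: U_def Uset_def L_def d_def word_def)
    also have "\<dots> \<longleftrightarrow> (\<forall>j\<in>J. x (j + int d) \<in> F j)"
      using j0 jL by (auto simp: word_def)
    finally show ?thesis unfolding T'_def by simp
  qed
  have sets_nu: "sets \<nu> = sets full_shift_M" using sets_mu[OF inv] .
  have "emeasure \<nu> T = emeasure \<nu> T'" unfolding T'eq by (rule shiftn_inv[OF inv Tm, symmetric])
  also have "\<dots> = emeasure \<nu> V"
  proof (rule emeasure_eq_AE)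
    have "AE x in \<nu>. x \<in> X" using inv by (simp add: invariant_measure_on_def)
    then show "AE x in \<nu>. x \<in> T' \<longleftrightarrow> x \<in> V"
      by (rule AE_mp) (use eqv Xsub in auto)
  qed (use T'm Vm sets_nu in auto)
  also have "\<dots> = (\<Sum>u\<in>U. emeasure \<nu> (Cyl 0 u))" unfolding V_def
  proof (rule sum_emeasure[symmetric])
    show "(\<lambda>u. Cyl 0 u) ` U \<subseteq> sets \<nu>" using Cyl_sets sets_nu by auto
    show "disjoint_family_on (\<lambda>u. Cyl 0 u) U"
    unfolding disjoint_family_on_def
    proof (intro ballI impI)
      fix u u' assume "u \<in> U" "u' \<in> U" "u \<noteq> u'"
      then show "Cyl 0 u \<inter> Cyl 0 u' = {}"
        by (auto simp: Cyl0_word U_def Uset_def)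
    qed
  qed (rule Ufin)
  finally show ?thesis unfolding T_def U_def .
qed

theorem corollary6p3:
  fixes A :: "nat \<Rightarrow> nat set" and \<sigma> :: directive and \<mu> \<mu>' :: "(int \<Rightarrow> nat) measure"
  assumes "directive_seq A \<sigma>"
    and "everywhere_growing A \<sigma>"
    and "finite_alphabet_rank A"
    and "\<forall>n. invertible_mat (incidence_mat (A (Suc n)) (A n) (\<sigma> n))"
    and "invariant_measure_on (generated_subshift A \<sigma>) \<mu>"
    and "invariant_measure_on (generated_subshift A \<sigma>) \<mu>'"
    and "\<forall>a\<in>A 0. emeasure \<mu> (cyl a) = emeasure \<mu>' (cyl a)"
  shows "\<mu> = \<mu>'"
proof -
  note ds = assms(1) and eg = assms(2) and invm = assms(4) and inv1 = assms(5) and inv2 = assms(6)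
    and cyl = assms(7)
  have Xsub: "generated_subshift A \<sigma> \<subseteq> {x. \<forall>i. x i \<in> A 0}" by (auto simp: generated_subshift_def)
  have fin0: "finite (A 0)" using ds_fin[OF ds] .
  have fm: "finite_measure \<mu>" using ps[OF inv1] unfolding prob_space_def by blast
  have cw: "emeasure \<mu> (Cyl 0 u) = emeasure \<mu>' (Cyl 0 u)" if "u \<noteq> []" for u
  proof -
    interpret m1: prob_space \<mu> using ps[OF inv1] .
    interpret m2: prob_space \<mu>' using ps[OF inv2] .
    show ?thesis using key_eq[OF ds eg invm inv1 inv2 cyl that]
      by (simp add: m1.emeasure_eq_measure m2.emeasure_eq_measure)
  qed
  show ?thesis
  proof (rule measure_eqI_PiM_infinite[where I="UNIV::int set" and M="\<lambda>_. count_space (UNIV::nat set)"])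
    show "sets \<mu> = sets (Pi\<^sub>M UNIV (\<lambda>_. count_space UNIV))" using sets_mu[OF inv1] unfolding full_shift_M_def .
    show "sets \<mu>' = sets (Pi\<^sub>M UNIV (\<lambda>_. count_space UNIV))" using sets_mu[OF inv2] unfolding full_shift_M_def .
    show "finite_measure \<mu>" by (rule fm)
  next
    fix F J assume J: "finite (J::int set)"
    have "\<forall>u\<in>Uset (A 0) J F. u \<noteq> []" by (auto simp: Uset_def)
    then have "(\<Sum>u\<in>Uset (A 0) J F. emeasure \<mu> (Cyl 0 u)) = (\<Sum>u\<in>Uset (A 0) J F. emeasure \<mu>' (Cyl 0 u))"
      using cw by (intro sum.cong) auto
    then show "emeasure \<mu> (prod_emb UNIV (\<lambda>_. count_space UNIV) J (Pi\<^sub>E J F)) =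
               emeasure \<mu>' (prod_emb UNIV (\<lambda>_. count_space UNIV) J (Pi\<^sub>E J F))"
      unfolding emb_eq rect_sum[OF inv1 Xsub fin0 J] rect_sum[OF inv2 Xsub fin0 J] .
  qed
qed

end
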